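(* Let $0<x_L<\mu<x_H<1$, let $F$ be the distribution over posteriors supported on $\{x_L,x_H\}$ with mean $\mu$, and consider a contract implementing $F$ that minimizes the principal's expected transfer among all contracts implementing $F$. Write $\alpha=t(x_L,\theta_1)$, $\beta=t(x_L,\theta_2)$, $\gamma=t(x_H,\theta_1)$, $\delta=t(x_H,\theta_2)$, and let $f$ be the tangent line to $N(\cdot\mid x_L)$ at $x_L$, namely $f(x)=(1-x_L)\alpha+x_L\beta-\kappa c(x_L)+(\beta-\alpha-\kappa c'(x_L))(x-x_L)$. Say the constraint (IC) is the requirement $f(x)\ge v_0-\kappa c(x)$ for all $x\in[0,1]$, and that it binds if equality holds at some $x\in[0,1]$. Then at the optimum one of the following holds: (i) $F$ can be implemented efficiently (and (IC) binds); or (ii) $F$ cannot be implemented efficiently, and either (a) (IC) binds and $\beta=0$; or (b) (IC) binds and $\gamma=0$; or (c) (IC) does not bind and $\gamma=\beta=0$.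
   Context: There are two states $\Theta=\{\theta_1,\theta_2\}$; a belief is identified with $x\in[0,1]$, the probability of $\theta_2$; the prior is $\mu\in(0,1)$. Distributions over posteriors are probability measures on $[0,1]$ with mean $\mu$. Acquiring $F$ costs the agent $\kappa\int c\,dF$, where $\kappa>0$ and $c:[0,1]\to\mathbb{R}_+$ is strictly convex, twice continuously differentiable, bounded on $(0,1)$, $c(\mu)=0$. The agent is risk neutral and protected by limited liability: a contract $(M,t)$ is a compact message set $M$ and a transfer $t:M\times\Theta\to\mathbb{R}_+$ in money. The agent has outside option $v_0\ge0$. Timing: the principal offers $(M,t)$; the agent rejects (getting $v_0$) or accepts, chooses any Bayes-plausible $G$ paying $\kappa\int c\,dG$, privately observes $x\sim G$, then walks away (getting $v_0$) or sends $d\in M$ and receives $t(d,\theta)$ in realized state $\theta$. $N(x\mid d)=(1-x)t(d,\theta_1)+x\,t(d,\theta_2)-\kappa c(x)$. $(M,t)$ implements $F$ if $M=\operatorname{supp}(F)$ and "accept, acquire $F$, send the realized posterior as message" is optimal among all agent strategies (rejecting; or accepting, acquiring any $G$, and at each posterior sending any possibly randomized message or walking away). The principal's cost is the expected transfer. $F$ is implemented efficiently if it is implemented at expected transfer equal to the first-best cost $\kappa\int c\,dF+v_0$. *)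

theory Defs
  imports "HOL-Probability.Probability"
begin

datatype state = Th1 | Th2

definition strictly_convex_on :: "real set \<Rightarrow> (real \<Rightarrow> real) \<Rightarrow> bool" where
  "strictly_convex_on S f \<longleftrightarrow>
     (\<forall>x\<in>S. \<forall>y\<in>S. \<forall>u::real. x \<noteq> y \<and> 0 < u \<and> u < 1 \<longrightarrow>
        f (u * x + (1 - u) * y) < u * f x + (1 - u) * f y)"

definition pay :: "(real \<Rightarrow> state \<Rightarrow> real) \<Rightarrow> real \<Rightarrow> real \<Rightarrow> real" where
  "pay t d x = (1 - x) * t d Th1 + x * t d Th2"

definition bayes_plausible :: "real \<Rightarrow> real measure \<Rightarrow> bool" where
  "bayes_plausible \<mu> G \<longleftrightarrow> prob_space G \<and> sets G = sets borel \<and>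
     (AE x in G. x \<in> {0..1}) \<and> integrable G (\<lambda>x. x) \<and> (\<integral>x. x \<partial>G) = \<mu>"

text \<open>Value at posterior x of a (possibly randomized) report rule: sigma x is a
  distribution over messages (Some d) and walking away (None, worth v0).\<close>
definition report_value ::
  "real \<Rightarrow> (real \<Rightarrow> state \<Rightarrow> real) \<Rightarrow> (real \<Rightarrow> real option pmf) \<Rightarrow> real \<Rightarrow> real" where
  "report_value v0 t \<sigma> x =
     measure_pmf.expectation (\<sigma> x) (\<lambda>r. case r of None \<Rightarrow> v0 | Some d \<Rightarrow> pay t d x)"

definition truthful_payoff ::
  "real \<Rightarrow> (real \<Rightarrow> real) \<Rightarrow> (real \<Rightarrow> state \<Rightarrow> real) \<Rightarrow> real pmf \<Rightarrow> real" where
  "truthful_payoff \<kappa> c t F =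
     measure_pmf.expectation F (\<lambda>x. pay t x x) - \<kappa> * measure_pmf.expectation F c"

definition expected_transfer :: "(real \<Rightarrow> state \<Rightarrow> real) \<Rightarrow> real pmf \<Rightarrow> real" where
  "expected_transfer t F = measure_pmf.expectation F (\<lambda>x. pay t x x)"

definition implements ::
  "real \<Rightarrow> (real \<Rightarrow> real) \<Rightarrow> real \<Rightarrow> real \<Rightarrow> real set \<Rightarrow> (real \<Rightarrow> state \<Rightarrow> real)
     \<Rightarrow> real pmf \<Rightarrow> bool" where
  "implements \<kappa> c v0 \<mu> M t F \<longleftrightarrow>
     M = set_pmf F \<and> (\<forall>d\<in>M. \<forall>\<theta>. 0 \<le> t d \<theta>) \<and>
     v0 \<le> truthful_payoff \<kappa> c t F \<and>
     (\<forall>G \<sigma>. bayes_plausible \<mu> G \<and>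
        (\<forall>x. set_pmf (\<sigma> x) \<subseteq> insert None (Some ` M)) \<and>
        set_integrable G {0..1} (report_value v0 t \<sigma>) \<longrightarrow>
        (LINT x:{0..1}|G. report_value v0 t \<sigma> x) - \<kappa> * (LINT x:{0..1}|G. c x)
          \<le> truthful_payoff \<kappa> c t F)"

definition efficiently_implementable ::
  "real \<Rightarrow> (real \<Rightarrow> real) \<Rightarrow> real \<Rightarrow> real \<Rightarrow> real pmf \<Rightarrow> bool" where
  "efficiently_implementable \<kappa> c v0 \<mu> F \<longleftrightarrow>
     (\<exists>t. implements \<kappa> c v0 \<mu> (set_pmf F) t F \<and>
          expected_transfer t F = \<kappa> * measure_pmf.expectation F c + v0)"

definition two_point :: "real \<Rightarrow> real \<Rightarrow> real \<Rightarrow> real pmf" where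
  "two_point xL xH \<mu> =
     map_pmf (\<lambda>b. if b then xH else xL) (bernoulli_pmf ((\<mu> - xL) / (xH - xL)))"

end

theory Submission
  imports Defs
begin


definition val :: "real \<Rightarrow> (real \<Rightarrow> state \<Rightarrow> real) \<Rightarrow> real option \<Rightarrow> real \<Rightarrow> real" where
  "val v0 t r y = (case r of None \<Rightarrow> v0 | Some d \<Rightarrow> pay t d y)"

lemma tp_exp:
  assumes "xL < \<mu>" "\<mu> < xH"
  shows "measure_pmf.expectation (two_point xL xH \<mu>) h =
     (1 - (\<mu>-xL)/(xH-xL)) * h xL + ((\<mu>-xL)/(xH-xL)) * h xH"
proof -
  have "0 \<le> (\<mu>-xL)/(xH-xL)" "(\<mu>-xL)/(xH-xL) \<le> 1" using assms by (auto simp: divide_simps)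
  then show ?thesis unfolding two_point_def by (simp add: algebra_simps)
qed

lemma c_meas:
  fixes c :: "real \<Rightarrow> real"
  assumes "continuous_on {0<..<1} c"
  shows "(\<lambda>x. indicator {0..1} x * c x) \<in> borel_measurable borel"
proof -
  have eq: "(\<lambda>x. indicator {0..1} x * c x) = (\<lambda>x. indicator {0<..<1} x *\<^sub>R c x + indicator {0} x * c 0 + indicator {1} x * c 1)"
    by (auto simp: indicator_def fun_eq_iff)
  have "(\<lambda>x. indicator {0<..<1} x *\<^sub>R c x) \<in> borel_measurable borel"
    by (rule borel_measurable_continuous_on_indicator) (auto simp: assms)
  then show ?thesis unfolding eq by measurable
qed

lemma val_meas: "val v0 t r \<in> borel_measurable borel"
  by (cases r) (simp_all add: val_def[abs_def] pay_def)

lemma dev_two: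
  fixes t :: "real \<Rightarrow> state \<Rightarrow> real" and c :: "real \<Rightarrow> real"
  assumes impl: "implements \<kappa> c v0 \<mu> M t F"
    and cm: "(\<lambda>x. indicator {0..1} x * c x) \<in> borel_measurable borel"
    and y: "y1 \<in> {0..1}" "y2 \<in> {0..1}" "y1 \<noteq> y2" and q: "0 \<le> q" "q \<le> 1"
    and mean: "(1-q)*y1 + q*y2 = \<mu>"
    and r: "r1 \<in> insert None (Some ` M)" "r2 \<in> insert None (Some ` M)"
  shows "(1-q)*(val v0 t r1 y1 - \<kappa> * c y1) + q*(val v0 t r2 y2 - \<kappa> * c y2) \<le> truthful_payoff \<kappa> c t F"
proof -
  define g where "g = (\<lambda>b::bool. if b then y2 else y1)"
  define G where "G = distr (measure_pmf (bernoulli_pmf q)) borel g"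
  define \<sigma> where "\<sigma> = (\<lambda>y::real. if y = y2 then return_pmf r2 else return_pmf r1)"
  have gm[measurable]: "g \<in> measurable (measure_pmf (bernoulli_pmf q)) borel" by simp
  have fin: "finite (set_pmf (bernoulli_pmf q))" by (rule finite_subset[of _ UNIV]) auto
  have rv: "report_value v0 t \<sigma> = (\<lambda>y. if y = y2 then val v0 t r2 y else val v0 t r1 y)"
    by (auto simp: report_value_def \<sigma>_def val_def fun_eq_iff)
  have rvm: "(\<lambda>x. indicator {0..1} x *\<^sub>R report_value v0 t \<sigma> x) \<in> borel_measurable borel"
    unfolding rv using val_meas[of v0 t r1] val_meas[of v0 t r2] by measurable
  have cm': "(\<lambda>x. indicator {0..1} x *\<^sub>R c x) \<in> borel_measurable borel" using cm by simp
  have bp: "bayes_plausible \<mu> G"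
    unfolding bayes_plausible_def
  proof (intro conjI)
    show "prob_space G" unfolding G_def
      by (rule measure_pmf.prob_space_distr) simp
    show "sets G = sets borel" by (simp add: G_def)
    show "AE x in G. x \<in> {0..1}" unfolding G_def
      by (subst AE_distr_iff) (use y in \<open>auto simp: g_def\<close>)
    show "integrable G (\<lambda>x. x)" unfolding G_def
      by (subst integrable_distr_eq) (auto intro: integrable_measure_pmf_finite[OF fin])
    show "(\<integral>x. x \<partial>G) = \<mu>" unfolding G_def
      by (subst integral_distr) (use q mean in \<open>auto simp: g_def algebra_simps\<close>)
  qed
  have sup: "\<forall>x. set_pmf (\<sigma> x) \<subseteq> insert None (Some ` M)" using r by (auto simp: \<sigma>_def)
  have si: "set_integrable G {0..1} (report_value v0 t \<sigma>)"
    unfolding set_integrable_def G_def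
    using rvm by (subst integrable_distr_eq) (auto intro: integrable_measure_pmf_finite[OF fin])
  have "(LINT x:{0..1}|G. report_value v0 t \<sigma> x) - \<kappa> * (LINT x:{0..1}|G. c x) \<le> truthful_payoff \<kappa> c t F"
    using impl bp sup si unfolding implements_def by blast
  moreover have "(LINT x:{0..1}|G. report_value v0 t \<sigma> x) = (1-q)* val v0 t r1 y1 + q * val v0 t r2 y2"
    unfolding set_lebesgue_integral_def G_def
    by (subst integral_distr[OF gm rvm]) (use q y in \<open>auto simp: g_def rv\<close>)
  moreover have "(LINT x:{0..1}|G. c x) = (1-q)*c y1 + q * c y2"
    unfolding set_lebesgue_integral_def G_def
    by (subst integral_distr[OF gm cm']) (use q y in \<open>auto simp: g_def\<close>)
  ultimately show ?thesis by (simp add: algebra_simps)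
qed



lemma suff:
  fixes t :: "real \<Rightarrow> state \<Rightarrow> real" and c :: "real \<Rightarrow> real"
  assumes M: "M = set_pmf F" and finM: "finite M" and LL: "\<forall>d\<in>M. \<forall>\<theta>. 0 \<le> t d \<theta>"
    and bound: "\<forall>x\<in>{0..1}. v0 - \<kappa> * c x \<le> a + b * x \<and> (\<forall>d\<in>M. pay t d x - \<kappa> * c x \<le> a + b * x)"
    and tp: "truthful_payoff \<kappa> c t F = a + b * \<mu>" and v0le: "v0 \<le> a + b * \<mu>"
    and cm: "(\<lambda>x. indicator {0..1} x * c x) \<in> borel_measurable borel"
    and cbd: "\<forall>x\<in>{0..1}. \<bar>c x\<bar> \<le> K"
  shows "implements \<kappa> c v0 \<mu> M t F"
  unfolding implements_def
proof (intro conjI allI impI)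
  show "M = set_pmf F" by fact
  show "\<forall>d\<in>M. \<forall>\<theta>. 0 \<le> t d \<theta>" by fact
  show "v0 \<le> truthful_payoff \<kappa> c t F" using tp v0le by simp
  fix G \<sigma>
  assume H: "bayes_plausible \<mu> G \<and> (\<forall>x. set_pmf (\<sigma> x) \<subseteq> insert None (Some ` M)) \<and>
        set_integrable G {0..1} (report_value v0 t \<sigma>)"
  then have ps: "prob_space G" and sG: "sets G = sets borel" and AEG: "AE x in G. x \<in> {0..1}"
    and ix: "integrable G (\<lambda>x. x)" and mx: "(\<integral>x. x \<partial>G) = \<mu>"
    and sup: "\<And>x. set_pmf (\<sigma> x) \<subseteq> insert None (Some ` M)"
    and si: "set_integrable G {0..1} (report_value v0 t \<sigma>)"
    unfolding bayes_plausible_def by auto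
  interpret prob_space G by (rule ps)
  have mG[measurable_cong]: "sets G = sets borel" by (rule sG)
  have cmG: "(\<lambda>x. indicator {0..1} x * c x) \<in> borel_measurable G"
    using cm measurable_cong_sets[OF sG refl] by blast
  have ic: "integrable G (\<lambda>x. indicator {0..1} x * c x)"
  proof (rule integrable_const_bound[where B=K])
    show "AE x in G. norm (indicator {0..1} x * c x) \<le> K"
      using cbd by (intro AE_I2) (auto simp: indicator_def intro: order.trans[OF _ cbd[rule_format, of 1]])
    show "(\<lambda>x. indicator {0..1} x * c x) \<in> borel_measurable G" by fact
  qed
  have iab: "integrable G (\<lambda>x. a + b * x)" using ix by auto
  have iabi: "integrable G (\<lambda>x. indicator {0..1} x *\<^sub>R (a + b * x))"
    by (rule integrable_mult_indicator) (use iab sG in auto)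
  have Iab: "(\<integral>x. indicator {0..1} x *\<^sub>R (a + b * x) \<partial>G) = a + b * \<mu>"
  proof -
    have "(\<integral>x. indicator {0..1} x *\<^sub>R (a + b * x) \<partial>G) = (\<integral>x. a + b * x \<partial>G)"
      by (rule integral_cong_AE) (use AEG iabi iab in \<open>auto intro: borel_measurable_integrable\<close>)
    also have "\<dots> = a + b * \<mu>" using ix mx by (simp add: prob_space)
    finally show ?thesis .
  qed
  have pt: "report_value v0 t \<sigma> x \<le> a + b * x + \<kappa> * c x" if x: "x \<in> {0..1}" for x
  proof -
    have fs: "finite (set_pmf (\<sigma> x))" by (rule finite_subset[OF sup[of x]]) (simp add: finM)
    show ?thesis unfolding report_value_def
    proof (rule measure_pmf.integral_le_const)
      show "integrable (measure_pmf (\<sigma> x)) (\<lambda>r. case r of None \<Rightarrow> v0 | Some d \<Rightarrow> pay t d x)"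
        by (rule integrable_measure_pmf_finite[OF fs])
      show "AE r in measure_pmf (\<sigma> x). (case r of None \<Rightarrow> v0 | Some d \<Rightarrow> pay t d x) \<le> a + b * x + \<kappa> * c x"
      proof (rule AE_pmfI)
        fix r assume "r \<in> set_pmf (\<sigma> x)"
        then have "r \<in> insert None (Some ` M)" using sup by blast
        then show "(case r of None \<Rightarrow> v0 | Some d \<Rightarrow> pay t d x) \<le> a + b * x + \<kappa> * c x"
          using bound[rule_format, OF x] by (auto simp: algebra_simps)
      qed
    qed
  qed
  have si2: "set_integrable G {0..1} (\<lambda>x. a + b * x + \<kappa> * c x)"
  proof -
    have "integrable G (\<lambda>x. indicator {0..1} x *\<^sub>R (a + b * x) + \<kappa> * (indicator {0..1} x * c x))"
      using iabi ic by auto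
    then show ?thesis unfolding set_integrable_def by (simp add: algebra_simps)
  qed
  have "(LINT x:{0..1}|G. report_value v0 t \<sigma> x) \<le> (LINT x:{0..1}|G. a + b * x + \<kappa> * c x)"
    by (rule set_integral_mono[OF si si2 pt])
  also have "\<dots> = (\<integral>x. indicator {0..1} x *\<^sub>R (a + b * x) + \<kappa> * (indicator {0..1} x * c x) \<partial>G)"
    unfolding set_lebesgue_integral_def by (rule Bochner_Integration.integral_cong) (auto simp: algebra_simps)
  also have "\<dots> = a + b * \<mu> + \<kappa> * (LINT x:{0..1}|G. c x)"
    using iabi ic Iab by (simp add: set_lebesgue_integral_def)
  finally show "(LINT x:{0..1}|G. report_value v0 t \<sigma> x) - \<kappa> * (LINT x:{0..1}|G. c x) \<le> truthful_payoff \<kappa> c t F"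
    using tp by simp
qed



lemma sc_convex:
  assumes "strictly_convex_on {0..1} c"
  shows "convex_on {0..1} c"
proof (rule convex_onI)
  fix u x y :: real assume u: "0 < u" "u < 1" and xy: "x \<in> {0..1}" "y \<in> {0..1}"
  show "c ((1 - u) *\<^sub>R x + u *\<^sub>R y) \<le> (1 - u) * c x + u * c y"
  proof (cases "x = y")
    case True then show ?thesis by (simp add: algebra_simps)
  next
    case False
    have "c ((1-u) * x + (1 - (1-u)) * y) < (1-u) * c x + (1 - (1-u)) * c y"
      using assms False u xy unfolding strictly_convex_on_def by (meson diff_gt_0_iff_gt diff_less_eq less_add_same_cancel1)
    then show ?thesis by simp
  qed
qed (rule convex_real_interval)

lemma tangent_ineq:
  assumes "convex_on {0..1} c" "q \<in> {0<..<1}" "y \<in> {0..1}" "(c has_real_derivative d) (at q)"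
  shows "c y - c q \<ge> d * (y - q)"
proof (rule convex_on_imp_above_tangent[OF assms(1)])
  show "connected {0..1::real}" by simp
  show "q \<in> interior {0..1}" using assms(2) by simp
  show "y \<in> {0..1}" by fact
  show "(c has_real_derivative d) (at q within {0..1})" using assms(4) by (rule has_field_derivative_at_within)
qed



theorem proposition5:
  fixes \<kappa> v0 \<mu> xL xH :: real and c :: "real \<Rightarrow> real"
    and t :: "real \<Rightarrow> state \<Rightarrow> real"
  assumes kappa: "\<kappa> > 0" and v0: "v0 \<ge> 0"
    and c_nonneg: "\<forall>x\<in>{0..1}. c x \<ge> 0"
    and c_strict: "strictly_convex_on {0..1} c"
    and c_C2: "\<exists>c' c''. (\<forall>x\<in>{0<..<1}. (c has_real_derivative c' x) (at x) \<and>
                              (c' has_real_derivative c'' x) (at x)) \<and>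
                         continuous_on {0<..<1} c''"
    and c_bdd: "bounded (c ` {0<..<1})"
    and c_mu: "c \<mu> = 0"
    and order: "0 < xL" "xL < \<mu>" "\<mu> < xH" "xH < 1"
    and impl: "implements \<kappa> c v0 \<mu> {xL, xH} t (two_point xL xH \<mu>)"
    and opt: "\<forall>t'. implements \<kappa> c v0 \<mu> {xL, xH} t' (two_point xL xH \<mu>) \<longrightarrow>
                expected_transfer t (two_point xL xH \<mu>) \<le> expected_transfer t' (two_point xL xH \<mu>)"
  defines "\<alpha> \<equiv> t xL Th1" and "\<beta> \<equiv> t xL Th2" and "\<gamma> \<equiv> t xH Th1" and "\<delta> \<equiv> t xH Th2"
  defines "f \<equiv> (\<lambda>x. (1 - xL) * \<alpha> + xL * \<beta> - \<kappa> * c xL + (\<beta> - \<alpha> - \<kappa> * deriv c xL) * (x - xL))"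
  defines "IC_binds \<equiv> (\<exists>x\<in>{0..1}. f x = v0 - \<kappa> * c x)"
  shows "(efficiently_implementable \<kappa> c v0 \<mu> (two_point xL xH \<mu>) \<and> IC_binds) \<or>
         (\<not> efficiently_implementable \<kappa> c v0 \<mu> (two_point xL xH \<mu>) \<and>
            ((IC_binds \<and> \<beta> = 0) \<or> (IC_binds \<and> \<gamma> = 0) \<or> (\<not> IC_binds \<and> \<gamma> = 0 \<and> \<beta> = 0)))"
proof -
  define F where "F = two_point xL xH \<mu>"
  define p where "p = (\<mu> - xL)/(xH - xL)"
  have implF: "implements \<kappa> c v0 \<mu> {xL, xH} t F" using impl by (simp add: F_def)
  have optF: "\<And>t'. implements \<kappa> c v0 \<mu> {xL, xH} t' F \<Longrightarrow> expected_transfer t F \<le> expected_transfer t' F"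
    using opt by (simp add: F_def)
  have p01: "0 < p" "p < 1" using order by (auto simp: p_def divide_simps)
  have pm: "p*(xH-xL) = \<mu> - xL" using order by (simp add: p_def)
  have "(1-p)*xL + p*xH = xL + p*(xH-xL)" by (simp add: algebra_simps)
  then have pmu: "(1-p)*xL + p*xH = \<mu>" using pm by simp
  have E: "\<And>h. measure_pmf.expectation F h = (1-p)*h xL + p*h xH"
    unfolding F_def p_def by (rule tp_exp) (use order in auto)
  have MF: "{xL, xH} = set_pmf F" and LL: "\<forall>d\<in>{xL,xH}. \<forall>\<theta>. 0 \<le> t d \<theta>"
    and Tge: "v0 \<le> truthful_payoff \<kappa> c t F"
    using implF unfolding implements_def by auto
  have a0: "\<alpha> \<ge> 0" and b0: "\<beta> \<ge> 0" and g0: "\<gamma> \<ge> 0" and d0: "\<delta> \<ge> 0"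
    using LL by (auto simp: \<alpha>_def \<beta>_def \<gamma>_def \<delta>_def)
  obtain c' c'' where cd: "\<And>x. x \<in> {0<..<1} \<Longrightarrow> (c has_real_derivative c' x) (at x)"
    and cd2: "\<And>x. x \<in> {0<..<1} \<Longrightarrow> (c' has_real_derivative c'' x) (at x)"
    using c_C2 by blast
  have ccont: "continuous_on {0<..<1} c"
    by (rule continuous_at_imp_continuous_on) (use cd DERIV_isCont in blast)
  have c'cont: "continuous_on {0<..<1} c'"
    by (rule continuous_at_imp_continuous_on) (use cd2 DERIV_isCont in blast)
  have cm: "(\<lambda>x. indicator {0..1} x * c x) \<in> borel_measurable borel" by (rule c_meas[OF ccont])
  obtain B where B: "\<forall>x\<in>{0<..<1}. \<bar>c x\<bar> \<le> B" using c_bdd unfolding bounded_real by auto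
  define K where "K = max B (max \<bar>c 0\<bar> \<bar>c 1\<bar>)"
  have cbd: "\<forall>x\<in>{0..1}. \<bar>c x\<bar> \<le> K"
  proof
    fix x :: real assume x: "x \<in> {0..1}"
    show "\<bar>c x\<bar> \<le> K"
    proof (cases "x = 0 \<or> x = 1")
      case True then show ?thesis by (auto simp: K_def)
    next
      case False then have "x \<in> {0<..<1}" using x by auto
      then show ?thesis using B by (auto simp: K_def intro: order.trans[OF _ max.cobounded1])
    qed
  qed
  have conv: "convex_on {0..1} c" by (rule sc_convex[OF c_strict])
  have tang: "\<And>q y. q \<in> {0<..<1} \<Longrightarrow> y \<in> {0..1} \<Longrightarrow> c y - c q \<ge> c' q * (y - q)"
    using tangent_ineq[OF conv] cd by blast
  have xLi: "xL \<in> {0<..<1}" and xHi: "xH \<in> {0<..<1}" and mui: "\<mu> \<in> {0<..<1}" using order by auto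
  have dc: "deriv c xL = c' xL" using cd[OF xLi] by (rule DERIV_imp_deriv)
  define NL where "NL = pay t xL xL - \<kappa> * c xL"
  define NH where "NH = pay t xH xH - \<kappa> * c xH"
  define m where "m = (NH - NL)/(xH - xL)"
  define L where "L = (\<lambda>x. NL + m*(x - xL))"
  have LxH: "L xH = NH" using order by (simp add: L_def m_def)
  have LxL: "L xL = NL" by (simp add: L_def)
  have Laff: "\<And>q y1 y2. L ((1-q)*y1 + q*y2) = (1-q)*L y1 + q*L y2"
    by (simp add: L_def algebra_simps)
  have T: "truthful_payoff \<kappa> c t F = L \<mu>"
  proof -
    have "truthful_payoff \<kappa> c t F = (1-p)*NL + p*NH"
      by (simp add: truthful_payoff_def E NL_def NH_def algebra_simps)
    also have "\<dots> = (1-p)*L xL + p*L xH" using LxH LxL by simp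
    also have "\<dots> = L \<mu>" using Laff[of p xL xH] pmu by simp
    finally show ?thesis .
  qed
  have ET: "expected_transfer t F = L \<mu> + \<kappa> * measure_pmf.expectation F c"
    using T by (simp add: expected_transfer_def truthful_payoff_def)
  have valH: "val v0 t (Some xH) xH - \<kappa> * c xH = L xH" using LxH by (simp add: val_def NH_def)
  have valL: "val v0 t (Some xL) xL - \<kappa> * c xL = L xL" using LxL by (simp add: val_def NL_def)
  have nec: "val v0 t r x - \<kappa> * c x \<le> L x"
    if x: "x \<in> {0..1}" and r: "r \<in> insert None (Some ` {xL, xH})" for x r
  proof (cases "x \<le> \<mu>")
    case True
    define q where "q = (\<mu> - x)/(xH - x)"
    have q: "0 \<le> q" "q < 1" using True order by (auto simp: q_def divide_simps)
    have qm: "q*(xH-x) = \<mu> - x" using True order by (simp add: q_def)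
    have "(1-q)*x + q*xH = x + q*(xH-x)" by (simp add: algebra_simps)
    then have mean: "(1-q)*x + q*xH = \<mu>" using qm by simp
    have "(1-q)*(val v0 t r x - \<kappa> * c x) + q*(val v0 t (Some xH) xH - \<kappa> * c xH) \<le> truthful_payoff \<kappa> c t F"
      by (rule dev_two[OF implF cm]) (use x r q mean True order in auto)
    then have "(1-q)*(val v0 t r x - \<kappa> * c x) + q*L xH \<le> (1-q)*L x + q*L xH"
      using T Laff[of q x xH] mean valH by simp
    then have "(1-q)*(val v0 t r x - \<kappa> * c x) \<le> (1-q)*L x" by simp
    then show ?thesis using q by simp
  next
    case False
    define q where "q = (\<mu> - xL)/(x - xL)"
    have q: "0 < q" "q \<le> 1" using False order x by (auto simp: q_def divide_simps)
    have qm: "q*(x-xL) = \<mu> - xL" using False order by (simp add: q_def)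
    have "(1-q)*xL + q*x = xL + q*(x-xL)" by (simp add: algebra_simps)
    then have mean: "(1-q)*xL + q*x = \<mu>" using qm by simp
    have "(1-q)*(val v0 t (Some xL) xL - \<kappa> * c xL) + q*(val v0 t r x - \<kappa> * c x) \<le> truthful_payoff \<kappa> c t F"
      by (rule dev_two[OF implF cm]) (use x r q mean False order in auto)
    then have "(1-q)*L xL + q*(val v0 t r x - \<kappa> * c x) \<le> (1-q)*L xL + q*L x"
      using T Laff[of q xL x] mean valL by simp
    then have "q*(val v0 t r x - \<kappa> * c x) \<le> q*L x" by simp
    then show ?thesis using q by simp
  qed
  have sN: "\<And>x. x \<in> {0..1} \<Longrightarrow> v0 - \<kappa> * c x \<le> L x"
    using nec[of _ None] by (simp add: val_def)
  have NLx: "\<And>x. x \<in> {0..1} \<Longrightarrow> pay t xL x - \<kappa> * c x \<le> L x"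
    using nec[of _ "Some xL"] by (simp add: val_def)
  have NHx: "\<And>x. x \<in> {0..1} \<Longrightarrow> pay t xH x - \<kappa> * c x \<le> L x"
    using nec[of _ "Some xH"] by (simp add: val_def)
  have payL: "\<And>x. pay t xL x = (1-x)*\<alpha> + x*\<beta>" by (simp add: pay_def \<alpha>_def \<beta>_def)
  have payH: "\<And>x. pay t xH x = (1-x)*\<gamma> + x*\<delta>" by (simp add: pay_def \<gamma>_def \<delta>_def)
  have mL: "m = \<beta> - \<alpha> - \<kappa> * c' xL"
  proof -
    define \<phi> where "\<phi> = (\<lambda>y. L y - ((1-y)*\<alpha> + y*\<beta> - \<kappa> * c y))"
    have D: "(\<phi> has_real_derivative (m - (\<beta> - \<alpha> - \<kappa> * c' xL))) (at xL)"
      unfolding \<phi>_def L_def using cd[OF xLi]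
      by (auto intro!: derivative_eq_intros simp: algebra_simps)
    have "m - (\<beta> - \<alpha> - \<kappa> * c' xL) = 0"
    proof (rule DERIV_local_min[OF D])
      show "0 < min xL (1 - xL)" using order by simp
      show "\<forall>y. \<bar>xL - y\<bar> < min xL (1 - xL) \<longrightarrow> \<phi> xL \<le> \<phi> y"
      proof (intro allI impI)
        fix y assume "\<bar>xL - y\<bar> < min xL (1 - xL)"
        then have "y \<in> {0..1}" by auto
        then have "\<phi> y \<ge> 0" using NLx[of y] by (simp add: \<phi>_def payL)
        moreover have "\<phi> xL = 0" using LxL by (simp add: \<phi>_def NL_def payL)
        ultimately show "\<phi> xL \<le> \<phi> y" by simp
      qed
    qed
    then show ?thesis by simp
  qed
  have mH: "m = \<delta> - \<gamma> - \<kappa> * c' xH"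
  proof -
    define \<phi> where "\<phi> = (\<lambda>y. L y - ((1-y)*\<gamma> + y*\<delta> - \<kappa> * c y))"
    have D: "(\<phi> has_real_derivative (m - (\<delta> - \<gamma> - \<kappa> * c' xH))) (at xH)"
      unfolding \<phi>_def L_def using cd[OF xHi]
      by (auto intro!: derivative_eq_intros simp: algebra_simps)
    have "m - (\<delta> - \<gamma> - \<kappa> * c' xH) = 0"
    proof (rule DERIV_local_min[OF D])
      show "0 < min xH (1 - xH)" using order by simp
      show "\<forall>y. \<bar>xH - y\<bar> < min xH (1 - xH) \<longrightarrow> \<phi> xH \<le> \<phi> y"
      proof (intro allI impI)
        fix y assume "\<bar>xH - y\<bar> < min xH (1 - xH)"
        then have "y \<in> {0..1}" by auto
        then have "\<phi> y \<ge> 0" using NHx[of y] by (simp add: \<phi>_def payH)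
        moreover have "\<phi> xH = 0" using LxH by (simp add: \<phi>_def NH_def payH)
        ultimately show "\<phi> xH \<le> \<phi> y" by simp
      qed
    qed
    then show ?thesis by simp
  qed
  have fL: "\<And>x. f x = L x"
    by (simp add: f_def dc L_def NL_def payL mL)
  have binds_iff: "IC_binds \<longleftrightarrow> (\<exists>x\<in>{0..1}. L x = v0 - \<kappa> * c x)"
    by (simp add: IC_binds_def fL)
  have h1: "pay t xL xH \<le> pay t xH xH" using NLx[of xH] LxH order by (simp add: NH_def)
  have h2: "pay t xH xL \<le> pay t xL xL" using NHx[of xL] LxL order by (simp add: NL_def)
  have slope: "(\<beta> - \<delta>) - (\<alpha> - \<gamma>) \<le> 0"
  proof -
    have "(xH - xL) * ((\<beta> - \<delta>) - (\<alpha> - \<gamma>)) \<le> 0"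
      using h1 h2 unfolding payL payH by (simp add: algebra_simps)
    then show ?thesis using order by (simp add: mult_le_0_iff)
  qed
  have ag: "\<gamma> \<le> \<alpha>"
  proof -
    have "\<alpha> - \<gamma> = ((1-xL)*(\<alpha> - \<gamma>) + xL*(\<beta> - \<delta>)) - xL*((\<beta> - \<delta>) - (\<alpha> - \<gamma>))" by (simp add: algebra_simps)
    moreover have "(1-xL)*(\<alpha> - \<gamma>) + xL*(\<beta> - \<delta>) \<ge> 0" using h2 unfolding payL payH by (simp add: algebra_simps)
    moreover have "xL*((\<beta> - \<delta>) - (\<alpha> - \<gamma>)) \<le> 0" using slope order by (simp add: mult_le_0_iff)
    ultimately show ?thesis by linarith
  qed
  have bd: "\<beta> \<le> \<delta>"
  proof -
    have "\<beta> - \<delta> = ((1-xH)*(\<alpha> - \<gamma>) + xH*(\<beta> - \<delta>)) + (1-xH)*((\<beta> - \<delta>) - (\<alpha> - \<gamma>))" by (simp add: algebra_simps)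
    moreover have "(1-xH)*(\<alpha> - \<gamma>) + xH*(\<beta> - \<delta>) \<le> 0" using h1 unfolding payL payH by (simp add: algebra_simps)
    moreover have "(1-xH)*((\<beta> - \<delta>) - (\<alpha> - \<gamma>)) \<le> 0" using slope order by (simp add: mult_le_0_iff)
    ultimately show ?thesis by linarith
  qed
  define s where "s = (\<lambda>x. L x - v0 + \<kappa> * c x)"
  define sd where "sd = (\<lambda>q. m + \<kappa> * c' q)"
  have s0: "s x \<ge> 0" if x: "x \<in> {0..1}" for x using sN[OF x] unfolding s_def by linarith
  have stang: "\<And>q y. q \<in> {0<..<1} \<Longrightarrow> y \<in> {0..1} \<Longrightarrow> s y \<ge> s q + sd q * (y - q)"
  proof -
    fix q y :: real assume q: "q \<in> {0<..<1}" and y: "y \<in> {0..1}"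
    have "\<kappa> * (c' q * (y - q)) \<le> \<kappa> * (c y - c q)"
      using tang[OF q y] kappa by (intro mult_left_mono) auto
    then show "s y \<ge> s q + sd q * (y - q)" by (simp add: s_def sd_def L_def algebra_simps)
  qed
  have sdcont: "\<And>a b. 0 < a \<Longrightarrow> b < 1 \<Longrightarrow> continuous_on {a..b} sd"
  proof -
    fix a b :: real assume "0 < a" "b < 1"
    then have "{a..b} \<subseteq> {0<..<1}" by auto
    then have "continuous_on {a..b} c'" by (rule continuous_on_subset[OF c'cont])
    then show "continuous_on {a..b} sd" unfolding sd_def by (intro continuous_intros)
  qed
  have improve: False
    if w: "\<forall>x\<in>{0..1}. (1-x)*w0 + x*w1 \<le> s x" and wpos: "(1-\<mu>)*w0 + \<mu>*w1 > 0"
      and w0c: "w0 \<le> 0 \<or> \<gamma> > 0" and w1c: "w1 \<le> 0 \<or> \<beta> > 0" for w0 w1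
  proof -
    have "\<exists>e>0. e \<le> 1 \<and> e*w0 \<le> \<gamma> \<and> e*w1 \<le> \<beta>"
    proof -
      define e0 where "e0 = (if w0 > 0 then \<gamma>/w0 else 1)"
      define e1 where "e1 = (if w1 > 0 then \<beta>/w1 else 1)"
      define e where "e = min 1 (min e0 e1)"
      have "e0 > 0" using w0c by (auto simp: e0_def)
      moreover have "e1 > 0" using w1c by (auto simp: e1_def)
      ultimately have epos: "e > 0" by (simp add: e_def)
      have "e*w0 \<le> \<gamma>"
      proof (cases "w0 > 0")
        case True
        then have "e \<le> \<gamma>/w0" by (simp add: e_def e0_def)
        then show ?thesis using True by (simp add: field_simps)
      next
        case False then show ?thesis using epos g0 by (simp add: mult_nonneg_nonpos order.trans[of _ 0])
      qed
      moreover have "e*w1 \<le> \<beta>"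
      proof (cases "w1 > 0")
        case True
        then have "e \<le> \<beta>/w1" by (simp add: e_def e1_def)
        then show ?thesis using True by (simp add: field_simps)
      next
        case False then show ?thesis using epos b0 by (simp add: mult_nonneg_nonpos order.trans[of _ 0])
      qed
      moreover have "e \<le> 1" by (simp add: e_def)
      ultimately show ?thesis using epos by blast
    qed
    then obtain e where e: "e > 0" "e \<le> 1" "e*w0 \<le> \<gamma>" "e*w1 \<le> \<beta>" by blast
    define W where "W = (\<lambda>x. (1-x)*w0 + x*w1)"
    define t' where "t' = (\<lambda>d \<theta>. t d \<theta> - e * (case \<theta> of Th1 \<Rightarrow> w0 | Th2 \<Rightarrow> w1))"
    have pay': "\<And>d x. pay t' d x = pay t d x - e * W x"
      by (simp add: pay_def t'_def W_def algebra_simps)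
    define a where "a = NL - m*xL - e*w0"
    define b where "b = m - e*(w1 - w0)"
    have Lab: "\<And>x. a + b*x = L x - e * W x" by (simp add: a_def b_def L_def W_def algebra_simps)
    have eW: "\<And>x. x \<in> {0..1} \<Longrightarrow> e * W x \<le> s x"
    proof -
      fix x :: real assume x: "x \<in> {0..1}"
      show "e * W x \<le> s x"
      proof (cases "W x \<ge> 0")
        case True
        then have "e * W x \<le> W x" using e by (simp add: mult_left_le_one_le)
        moreover have "W x \<le> s x" using w x by (simp add: W_def)
        ultimately show ?thesis by linarith
      next
        case False
        then have "e * W x \<le> 0" using e by (simp add: mult_nonneg_nonpos)
        then show ?thesis using s0[OF x] by simp
      qed
    qed
    have "(1-p)*W xL + p*W xH = w0*(1 - ((1-p)*xL + p*xH)) + w1*((1-p)*xL + p*xH)"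
      by (simp add: W_def algebra_simps)
    then have Wmu: "(1-p)*W xL + p*W xH = W \<mu>" unfolding pmu by (simp add: W_def algebra_simps)
    have T': "truthful_payoff \<kappa> c t' F = L \<mu> - e * W \<mu>"
    proof -
      have "truthful_payoff \<kappa> c t' F = truthful_payoff \<kappa> c t F - e*((1-p)*W xL + p*W xH)"
        by (simp add: truthful_payoff_def E pay' algebra_simps)
      then show ?thesis using T Wmu by simp
    qed
    have impl': "implements \<kappa> c v0 \<mu> {xL, xH} t' F"
    proof (rule suff[OF MF _ _ _ _ _ cm cbd])
      show "finite {xL, xH}" by simp
      show "\<forall>d\<in>{xL, xH}. \<forall>\<theta>. 0 \<le> t' d \<theta>"
      proof (intro ballI allI)
        fix d \<theta> assume "d \<in> {xL, xH}"
        then show "0 \<le> t' d \<theta>"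
          using e ag bd by (cases \<theta>) (auto simp: t'_def \<alpha>_def \<beta>_def \<gamma>_def \<delta>_def)
      qed
      show "\<forall>x\<in>{0..1}. v0 - \<kappa> * c x \<le> a + b * x \<and> (\<forall>d\<in>{xL, xH}. pay t' d x - \<kappa> * c x \<le> a + b * x)"
      proof (intro ballI conjI)
        fix x :: real assume x: "x \<in> {0..1}"
        show "v0 - \<kappa> * c x \<le> a + b * x" using eW[OF x] by (simp add: Lab s_def)
        fix d assume "d \<in> {xL, xH}"
        then show "pay t' d x - \<kappa> * c x \<le> a + b * x"
          using NLx[OF x] NHx[OF x] by (auto simp: Lab pay')
      qed
      show "truthful_payoff \<kappa> c t' F = a + b * \<mu>" using T' Lab by simp
      have "\<mu> \<in> {0..1}" using mui by auto
      from eW[OF this] show "v0 \<le> a + b * \<mu>" using c_mu by (simp add: Lab s_def)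
    qed
    have "expected_transfer t F \<le> expected_transfer t' F" by (rule optF[OF impl'])
    moreover have "expected_transfer t' F = L \<mu> - e * W \<mu> + \<kappa> * measure_pmf.expectation F c"
      using T' by (simp add: expected_transfer_def truthful_payoff_def)
    moreover have "e * W \<mu> > 0" using e wpos by (simp add: W_def)
    ultimately show False using ET by simp
  qed
  show ?thesis
  proof (cases "L \<mu> = v0")
    case True
    have eff: "efficiently_implementable \<kappa> c v0 \<mu> F"
      unfolding efficiently_implementable_def
    proof (intro exI conjI)
      show "implements \<kappa> c v0 \<mu> (set_pmf F) t F" using implF MF by simp
      show "expected_transfer t F = \<kappa> * measure_pmf.expectation F c + v0" using ET True by simp
    qed
    have "IC_binds" unfolding binds_iff using True c_mu mui by (intro bexI[of _ \<mu>]) auto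
    then show ?thesis using eff by (simp add: F_def)
  next
    case False
    have Lgt: "L \<mu> > v0" using Tge T False by simp
    have neff: "\<not> efficiently_implementable \<kappa> c v0 \<mu> F"
    proof
      assume "efficiently_implementable \<kappa> c v0 \<mu> F"
      then obtain t' where t': "implements \<kappa> c v0 \<mu> (set_pmf F) t' F"
        "expected_transfer t' F = \<kappa> * measure_pmf.expectation F c + v0"
        unfolding efficiently_implementable_def by blast
      have "expected_transfer t F \<le> expected_transfer t' F" using optF t'(1) MF by simp
      then show False using ET Lgt t'(2) by simp
    qed
    have smu: "s \<mu> > 0" using Lgt c_mu by (simp add: s_def)
    define l0 where "l0 = s \<mu> - sd \<mu> * \<mu>"
    define l1 where "l1 = s \<mu> + sd \<mu> * (1 - \<mu>)"
    have lin: "\<forall>x\<in>{0..1}. (1-x)*l0 + x*l1 \<le> s x"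
    proof
      fix x :: real assume x: "x \<in> {0..1}"
      have "(1-x)*l0 + x*l1 = s \<mu> + sd \<mu> * (x - \<mu>)" by (simp add: l0_def l1_def algebra_simps)
      then show "(1-x)*l0 + x*l1 \<le> s x" using stang[OF mui x] by simp
    qed
    have lmu: "(1-\<mu>)*l0 + \<mu>*l1 = s \<mu>" by (simp add: l0_def l1_def algebra_simps)
    have P1: "\<not> (\<beta> > 0 \<and> \<gamma> > 0)"
    proof
      assume bg: "\<beta> > 0 \<and> \<gamma> > 0"
      show False by (rule improve[OF lin]) (use bg lmu smu in auto)
    qed
    have R: "(IC_binds \<and> \<beta> = 0) \<or> (IC_binds \<and> \<gamma> = 0) \<or> (\<not> IC_binds \<and> \<gamma> = 0 \<and> \<beta> = 0)"
    proof (cases IC_binds)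
      case True then show ?thesis using P1 b0 g0 by auto
    next
      case False
      have spos: "s x > 0" if x: "x \<in> {0..1}" for x
      proof -
        have "L x \<noteq> v0 - \<kappa> * c x" using False x binds_iff by blast
        then have "s x \<noteq> 0" by (simp add: s_def)
        then show ?thesis using s0[OF x] by simp
      qed
      have mu01: "\<mu> \<in> {0..1}" using mui by auto
      have "\<beta> = 0"
      proof (rule ccontr)
        assume "\<beta> \<noteq> 0" then have bp: "\<beta> > 0" using b0 by simp
        then have g: "\<gamma> = 0" using P1 g0 by auto
        show False
        proof (cases "sd \<mu> \<ge> 0")
          case sdp: True
          show False
          proof (cases "l0 \<le> 0")
            case True show False by (rule improve[OF lin]) (use True lmu smu bp in auto)
          next
            case False
            have l1p: "l1 \<ge> s \<mu>" using sdp mui by (simp add: l1_def)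
            define mm where "mm = min l0 l1"
            have mmp: "mm > 0" using False l1p smu by (simp add: mm_def)
            have w: "\<forall>x\<in>{0..1}. (1-x)*0 + x*mm \<le> s x"
            proof
              fix x :: real assume x: "x \<in> {0..1}"
              have "(1-x)*mm + x*mm \<le> (1-x)*l0 + x*l1"
                using x by (intro add_mono mult_left_mono) (auto simp: mm_def)
              moreover have "x*mm \<le> mm" using x mmp by (simp add: mult_left_le_one_le)
              moreover have "(1-x)*mm + x*mm = mm" by (simp add: algebra_simps)
              moreover have "(1-x)*l0 + x*l1 \<le> s x" using lin x by blast
              ultimately have "x*mm \<le> s x" by linarith
              then show "(1-x)*0 + x*mm \<le> s x" by simp
            qed
            show False by (rule improve[OF w]) (use mmp mui bp in auto)
          qed
        next
          case False
          have "sd xH = \<delta> - \<gamma>" using mH by (simp add: sd_def)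
          then have sdH: "sd xH \<ge> 0" using g d0 by simp
          obtain q where q: "\<mu> \<le> q" "q \<le> xH" "sd q = 0"
            using IVT'[of sd \<mu> 0 xH] sdcont[of \<mu> xH] False order sdH by auto
          have qi: "q \<in> {0<..<1}" using q order by auto
          have sq: "s q > 0" using spos qi by auto
          have w: "\<forall>x\<in>{0..1}. (1-x)*0 + x* s q \<le> s x"
          proof
            fix x :: real assume x: "x \<in> {0..1}"
            have "x * s q \<le> s q" using x sq by (simp add: mult_left_le_one_le)
            moreover have "s q \<le> s x" using stang[OF qi x] q by simp
            ultimately show "(1-x)*0 + x* s q \<le> s x" by simp
          qed
          show False by (rule improve[OF w]) (use sq mui bp in auto)
        qed
      qed
      moreover have "\<gamma> = 0"
      proof (rule ccontr)
        assume "\<gamma> \<noteq> 0" then have gp: "\<gamma> > 0" using g0 by simp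
        then have bz: "\<beta> = 0" using P1 b0 by auto
        show False
        proof (cases "sd \<mu> \<le> 0")
          case sdn: True
          show False
          proof (cases "l1 \<le> 0")
            case True show False by (rule improve[OF lin]) (use True lmu smu gp in auto)
          next
            case False
            have l0p: "l0 \<ge> s \<mu>" using sdn mui by (simp add: l0_def mult_nonpos_nonneg)
            define mm where "mm = min l0 l1"
            have mmp: "mm > 0" using False l0p smu by (simp add: mm_def)
            have w: "\<forall>x\<in>{0..1}. (1-x)*mm + x*0 \<le> s x"
            proof
              fix x :: real assume x: "x \<in> {0..1}"
              have "(1-x)*mm + x*mm \<le> (1-x)*l0 + x*l1"
                using x by (intro add_mono mult_left_mono) (auto simp: mm_def)
              moreover have "(1-x)*mm \<le> mm" using x mmp by (simp add: mult_left_le_one_le)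
              moreover have "(1-x)*mm + x*mm = mm" by (simp add: algebra_simps)
              moreover have "(1-x)*l0 + x*l1 \<le> s x" using lin x by blast
              ultimately have "(1-x)*mm \<le> s x" by linarith
              then show "(1-x)*mm + x*0 \<le> s x" by simp
            qed
            show False by (rule improve[OF w]) (use mmp mui gp in auto)
          qed
        next
          case False
          have "sd xL = \<beta> - \<alpha>" using mL by (simp add: sd_def)
          then have sdL: "sd xL \<le> 0" using bz a0 by simp
          obtain q where q: "xL \<le> q" "q \<le> \<mu>" "sd q = 0"
            using IVT'[of sd xL 0 \<mu>] sdcont[of xL \<mu>] False order sdL by auto
          have qi: "q \<in> {0<..<1}" using q order by auto
          have sq: "s q > 0" using spos qi by auto
          have w: "\<forall>x\<in>{0..1}. (1-x)* s q + x*0 \<le> s x"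
          proof
            fix x :: real assume x: "x \<in> {0..1}"
            have "(1-x) * s q \<le> s q" using x sq by (simp add: mult_left_le_one_le)
            moreover have "s q \<le> s x" using stang[OF qi x] q by simp
            ultimately show "(1-x)* s q + x*0 \<le> s x" by simp
          qed
          show False by (rule improve[OF w]) (use sq mui gp in auto)
        qed
      qed
      ultimately show ?thesis using False by simp
    qed
    show ?thesis using neff R by (simp add: F_def)
  qed
qed

end
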